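(* In the static load balancing game described in the context, suppose that initially each player $i$ uses an action $a_i^0$ with $a_{ij}^0\neq 0$ for all $i\in[n]$, $j\in[m]$. Suppose the players update their actions sequentially, each player exactly once and in any order, each time replacing its action by its (unique) best response to the current actions of the other players, i.e., by the minimizer of $D_i(\cdot,a_{-i})$ over the simplex $A_i$. Then the resulting action profile is a pure Nash equilibrium. In other words, the best-response dynamics converge to a pure Nash equilibrium in $n$ iterations.
   Context: Static load balancing game: there are $m$ servers $[m]$ with service rates $\mu_j>0$ and initial loads $s_j^0\ge 0$, and $n$ players $[n]$; player $i$ holds a job of length $\lambda_i>0$. Player $i$'s action set is $A_i=\{a_i=(a_{i1},\dots,a_{im}):\sum_j a_{ij}=1,\ a_{ij}\ge0\}$, $a_{ij}$ being the fraction of job $i$ placed on server $j$. The cost of player $i$ under profile $a$ is $$D_i(a)=\sum_{j=1}^m \lambda_i a_{ij}\left(\frac{\lambda_i a_{ij}}{2\mu_j}+\frac{s_j^0+\sum_{k\neq i}\lambda_k a_{kj}}{\mu_j}\right),$$ which is strongly convex in $a_i$. A pure Nash equilibrium is a profile $a$ with $D_i(a_i,a_{-i})\le D_i(a_i',a_{-i})$ for all $i$ and $a_i'\in A_i$. *)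

theory Defs
  imports Complex_Main
begin

text \<open>Servers are indexed by j < m, players by i < n. A profile is a function
  a :: nat => nat => real with a i j the fraction of job i placed on server j.\<close>

definition simplex :: "nat \<Rightarrow> (nat \<Rightarrow> real) set" where
  "simplex m = {x. (\<forall>j<m. 0 \<le> x j) \<and> (\<Sum>j<m. x j) = 1}"

definition cost ::
  "nat \<Rightarrow> nat \<Rightarrow> (nat \<Rightarrow> real) \<Rightarrow> (nat \<Rightarrow> real) \<Rightarrow> (nat \<Rightarrow> real)
   \<Rightarrow> nat \<Rightarrow> (nat \<Rightarrow> nat \<Rightarrow> real) \<Rightarrow> real" where
  "cost m n mu s0 lam i a =
     (\<Sum>j<m. lam i * a i j *
        (lam i * a i j / (2 * mu j)
         + (s0 j + (\<Sum>k\<in>{..<n} - {i}. lam k * a k j)) / mu j))"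

definition best_response ::
  "nat \<Rightarrow> nat \<Rightarrow> (nat \<Rightarrow> real) \<Rightarrow> (nat \<Rightarrow> real) \<Rightarrow> (nat \<Rightarrow> real)
   \<Rightarrow> nat \<Rightarrow> (nat \<Rightarrow> nat \<Rightarrow> real) \<Rightarrow> (nat \<Rightarrow> real) \<Rightarrow> bool" where
  "best_response m n mu s0 lam i a b \<longleftrightarrow>
     b \<in> simplex m \<and>
     (\<forall>b'\<in>simplex m. cost m n mu s0 lam i (a(i := b)) \<le> cost m n mu s0 lam i (a(i := b')))"

definition pure_NE ::
  "nat \<Rightarrow> nat \<Rightarrow> (nat \<Rightarrow> real) \<Rightarrow> (nat \<Rightarrow> real) \<Rightarrow> (nat \<Rightarrow> real)
   \<Rightarrow> (nat \<Rightarrow> nat \<Rightarrow> real) \<Rightarrow> bool" where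
  "pure_NE m n mu s0 lam a \<longleftrightarrow>
     (\<forall>i<n. a i \<in> simplex m) \<and>
     (\<forall>i<n. \<forall>b'\<in>simplex m. cost m n mu s0 lam i a \<le> cost m n mu s0 lam i (a(i := b')))"

end

theory Submission
  imports Defs
begin

definition lv :: "nat \<Rightarrow> (nat \<Rightarrow> real) \<Rightarrow> (nat \<Rightarrow> real) \<Rightarrow> (nat \<Rightarrow> real) \<Rightarrow> (nat \<Rightarrow> nat \<Rightarrow> real) \<Rightarrow> nat \<Rightarrow> real" where
  "lv n mu s0 lam a j = (s0 j + (\<Sum>k<n. lam k * a k j)) / mu j"

definition oth :: "nat \<Rightarrow> (nat \<Rightarrow> real) \<Rightarrow> (nat \<Rightarrow> real) \<Rightarrow> (nat \<Rightarrow> real) \<Rightarrow> nat \<Rightarrow> (nat \<Rightarrow> nat \<Rightarrow> real) \<Rightarrow> nat \<Rightarrow> real" where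
  "oth n mu s0 lam i a j = (s0 j + (\<Sum>k\<in>{..<n}-{i}. lam k * a k j)) / mu j"

definition GG :: "nat \<Rightarrow> (nat \<Rightarrow> real) \<Rightarrow> (nat \<Rightarrow> real) \<Rightarrow> real \<Rightarrow> (nat \<Rightarrow> real) \<Rightarrow> real" where
  "GG m mu l la b = (\<Sum>j<m. la * b j * (la * b j / (2 * mu j) + l j))"

lemma cost_GG: "cost m n mu s0 lam i (a(i:=b)) = GG m mu (oth n mu s0 lam i a) (lam i) b"
  unfolding cost_def GG_def oth_def
  by (intro sum.cong refl) (auto intro!: sum.cong)

lemma lv_upd:
  assumes "i < n"
  shows "lv n mu s0 lam (a(i:=b)) j = oth n mu s0 lam i a j + lam i * b j / mu j"
proof -
  have "(\<Sum>k<n. lam k * (a(i:=b)) k j) = lam i * b j + (\<Sum>k\<in>{..<n}-{i}. lam k * (a(i:=b)) k j)"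
    using assms by (subst sum.remove[of _ i]) auto
  also have "(\<Sum>k\<in>{..<n}-{i}. lam k * (a(i:=b)) k j) = (\<Sum>k\<in>{..<n}-{i}. lam k * a k j)"
    by (intro sum.cong) auto
  finally show ?thesis unfolding lv_def oth_def by (simp add: add_divide_distrib)
qed

lemma pt_ident:
  assumes "mu \<noteq> (0::real)"
  shows "la*x'*(la*x'/(2*mu) + l) - la*x*(la*x/(2*mu)+l)
     = la*(x'-x)*(l + la*x/mu) + la^2*(x'-x)^2/(2*mu)"
  using assms by (simp add: field_simps power2_eq_square)

lemma KKT_nec:
  assumes mu: "\<forall>j<m. mu j > 0" and la: "la > 0" and bs: "b \<in> simplex m"
    and opt: "\<forall>b'\<in>simplex m. GG m mu l la b \<le> GG m mu l la b'"
    and j: "j < m" and j': "j' < m" and bj: "b j > 0"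
  shows "l j + la * b j / mu j \<le> l j' + la * b j' / mu j'"
proof (rule ccontr)
  assume H: "\<not> ?thesis"
  define T where "T k = l k + la * b k / mu k" for k
  have neq: "j \<noteq> j'" using H by auto
  define d where "d = T j - T j'"
  have d: "d > 0" using H unfolding d_def T_def by simp
  define K where "K = la * (1 / mu j + 1 / mu j')"
  have K: "K > 0" using mu j j' la unfolding K_def by (simp add: add_pos_pos)
  define e where "e = min (b j) (d / K)"
  have e0: "e > 0" using bj d K unfolding e_def by simp
  have eb: "e \<le> b j" unfolding e_def by simp
  have eK: "e * K \<le> d" using K unfolding e_def
    by (metis min.cobounded2 mult.commute pos_le_divide_eq)
  define b' where "b' k = b k - (if k = j then e else 0) + (if k = j' then e else 0)" for k
  have b'j: "b' j = b j - e" and b'j': "b' j' = b j' + e" using neq unfolding b'_def by auto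
  have b'o: "k \<noteq> j \<Longrightarrow> k \<noteq> j' \<Longrightarrow> b' k = b k" for k unfolding b'_def by simp
  have bnn: "\<forall>k<m. 0 \<le> b k" and bsum: "(\<Sum>k<m. b k) = 1" using bs unfolding simplex_def by auto
  have "b' \<in> simplex m"
  proof -
    have "\<forall>k<m. 0 \<le> b' k" using bnn eb e0 unfolding b'_def by auto
    moreover have "(\<Sum>k<m. b' k) = 1"
      unfolding b'_def using bsum j j' by (simp add: sum.distrib sum_subtractf)
    ultimately show ?thesis unfolding simplex_def by auto
  qed
  with opt have le: "GG m mu l la b \<le> GG m mu l la b'" by auto
  define t where "t x k = la * x * (la * x / (2 * mu k) + l k)" for x k
  have "GG m mu l la b' - GG m mu l la b = (\<Sum>k<m. t (b' k) k - t (b k) k)"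
    unfolding GG_def t_def by (simp add: sum_subtractf)
  also have "\<dots> = (\<Sum>k\<in>{j,j'}. t (b' k) k - t (b k) k)"
    using j j' by (intro sum.mono_neutral_right) (auto simp: b'o)
  also have "\<dots> = (t (b' j) j - t (b j) j) + (t (b' j') j' - t (b j') j')"
    using neq by simp
  also have "\<dots> = la * (-e) * T j + la^2 * e^2 / (2 * mu j) + (la * e * T j' + la^2 * e^2 / (2 * mu j'))"
    unfolding t_def T_def b'j b'j'
    using pt_ident[where mu="mu j" and la=la and x'="b j - e" and l="l j" and x="b j"]
      pt_ident[where mu="mu j'" and la=la and x'="b j' + e" and l="l j'" and x="b j'"]
      mu j j' by (simp add: power2_eq_square less_imp_neq[symmetric])
  also have "\<dots> = la * e * (- d + e * K / 2)"
    unfolding d_def K_def by (simp add: field_simps power2_eq_square)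
  finally have eq: "GG m mu l la b' - GG m mu l la b = la * e * (- d + e * K / 2)" .
  have "- d + e * K / 2 < 0" using eK d by linarith
  then have "la * e * (- d + e * K / 2) < 0" using la e0 by (simp add: mult_pos_neg)
  with eq le show False by linarith
qed

lemma KKT_suff:
  assumes mu: "\<forall>j<m. mu j > 0" and la: "la > 0" and bs: "b \<in> simplex m" and bs': "b' \<in> simplex m"
    and lo: "\<forall>j<m. c \<le> l j + la * b j / mu j"
    and eqc: "\<forall>j<m. b j > 0 \<longrightarrow> l j + la * b j / mu j = c"
  shows "GG m mu l la b \<le> GG m mu l la b'"
proof -
  have bnn: "\<forall>k<m. 0 \<le> b k" and bsum: "(\<Sum>k<m. b k) = 1" using bs unfolding simplex_def by auto
  have bnn': "\<forall>k<m. 0 \<le> b' k" and bsum': "(\<Sum>k<m. b' k) = 1" using bs' unfolding simplex_def by auto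
  have pt: "la * b' k * (la * b' k / (2 * mu k) + l k) - la * b k * (la * b k / (2 * mu k) + l k)
      \<ge> la * c * (b' k - b k)" if k: "k < m" for k
  proof -
    define T where "T = l k + la * b k / mu k"
    have m0: "mu k > 0" using mu k by auto
    have "la * b' k * (la * b' k / (2 * mu k) + l k) - la * b k * (la * b k / (2 * mu k) + l k)
        = la * (b' k - b k) * T + la^2 * (b' k - b k)^2 / (2 * mu k)"
      unfolding T_def using pt_ident[of "mu k"] m0 by simp
    moreover have "la^2 * (b' k - b k)^2 / (2 * mu k) \<ge> 0" using m0 by simp
    moreover have "b' k * T \<ge> b' k * c" using lo bnn' k unfolding T_def by (simp add: mult_left_mono)
    moreover have "b k * T = b k * c" using eqc bnn k unfolding T_def
      by (metis less_eq_real_def mult_zero_left)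
    ultimately have "la * b' k * (la * b' k / (2 * mu k) + l k) - la * b k * (la * b k / (2 * mu k) + l k)
        - la * c * (b' k - b k) \<ge> la * ((b' k * T - b' k * c) - (b k * T - b k * c))"
      by (simp add: algebra_simps)
    moreover have "(b' k * T - b' k * c) - (b k * T - b k * c) \<ge> 0"
      using \<open>b' k * T \<ge> b' k * c\<close> \<open>b k * T = b k * c\<close> by linarith
    then have "la * ((b' k * T - b' k * c) - (b k * T - b k * c)) \<ge> 0"
      using la by simp
    ultimately show ?thesis by linarith
  qed
  have "(\<Sum>k<m. la * c * (b' k - b k)) = la * c * ((\<Sum>k<m. b' k) - (\<Sum>k<m. b k))"
    by (simp add: right_diff_distrib sum_subtractf sum_distrib_left)
  also have "\<dots> = 0" using bsum bsum' by simp
  finally have z: "(\<Sum>k<m. la * c * (b' k - b k)) = 0" .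
  have "(\<Sum>k<m. la * c * (b' k - b k)) \<le> (\<Sum>k<m. la * b' k * (la * b' k / (2 * mu k) + l k) - la * b k * (la * b k / (2 * mu k) + l k))"
    using pt by (intro sum_mono) auto
  then show ?thesis unfolding GG_def using z by (simp add: sum_subtractf)
qed


theorem theorem2:
  fixes m n :: nat
    and mu s0 lam :: "nat \<Rightarrow> real"
    and \<sigma> :: "nat \<Rightarrow> nat"
    and seq :: "nat \<Rightarrow> nat \<Rightarrow> nat \<Rightarrow> real"
  assumes mu_pos: "\<forall>j<m. mu j > 0"
    and s0_nonneg: "\<forall>j<m. s0 j \<ge> 0"
    and lam_pos: "\<forall>i<n. lam i > 0"
    and init_action: "\<forall>i<n. seq 0 i \<in> simplex m"
    and init_nonzero: "\<forall>i<n. \<forall>j<m. seq 0 i j \<noteq> 0"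
    and order: "bij_betw \<sigma> {..<n} {..<n}"
    and update: "\<forall>k<n. \<exists>b. best_response m n mu s0 lam (\<sigma> k) (seq k) b
                          \<and> seq (Suc k) = (seq k)(\<sigma> k := b)"
  shows "pure_NE m n mu s0 lam (seq n)"
proof -
  let ?lv = "lv n mu s0 lam"
  have inv: "(\<forall>i<n. i \<notin> \<sigma>`{..<k} \<longrightarrow> seq k i = seq 0 i) \<and> (\<forall>i\<in>\<sigma>`{..<k}. seq k i \<in> simplex m)
     \<and> (\<exists>c. (\<forall>j<m. c \<le> ?lv (seq k) j) \<and> (\<forall>i\<in>\<sigma>`{..<k}. \<forall>j<m. seq k i j > 0 \<longrightarrow> ?lv (seq k) j = c))"
    if "k \<le> n" for k
    using that
  proof (induction k)
    case 0
    have "\<forall>j<m. 0 \<le> ?lv (seq 0) j"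
    proof (intro allI impI)
      fix j assume j: "j < m"
      have "0 \<le> (\<Sum>k<n. lam k * seq 0 k j)"
        using lam_pos init_action j unfolding simplex_def
        by (intro sum_nonneg) (simp add: less_imp_le)
      then show "0 \<le> ?lv (seq 0) j" unfolding lv_def using s0_nonneg mu_pos j
        by (simp add: less_imp_le)
    qed
    then show ?case by auto
  next
    case (Suc k)
    then have kn: "k < n" by simp
    from Suc.IH kn obtain c where
      I1: "\<forall>i<n. i \<notin> \<sigma>`{..<k} \<longrightarrow> seq k i = seq 0 i" and
      I2: "\<forall>i\<in>\<sigma>`{..<k}. seq k i \<in> simplex m" and
      I3a: "\<forall>j<m. c \<le> ?lv (seq k) j" and
      I3b: "\<forall>i\<in>\<sigma>`{..<k}. \<forall>j<m. seq k i j > 0 \<longrightarrow> ?lv (seq k) j = c" by auto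
    define p where "p = \<sigma> k"
    have pn: "p < n" using order kn unfolding p_def bij_betw_def by auto
    have pU: "p \<notin> \<sigma>`{..<k}"
    proof
      assume "p \<in> \<sigma>`{..<k}"
      then obtain k' where "k' < k" "\<sigma> k' = \<sigma> k" unfolding p_def by auto
      moreover have "inj_on \<sigma> {..<n}" using order bij_betw_imp_inj_on by blast
      ultimately have "k' = k" using kn by (auto dest: inj_onD)
      with \<open>k' < k\<close> show False by simp
    qed
    have U: "\<sigma>`{..<Suc k} = insert p (\<sigma>`{..<k})" unfolding p_def by (simp add: lessThan_Suc)
    from update kn obtain b where br: "best_response m n mu s0 lam p (seq k) b"
      and sq: "seq (Suc k) = (seq k)(p := b)" unfolding p_def by blast
    define a where "a = seq k"
    have ap: "a p = seq 0 p" using I1 pn pU unfolding a_def by auto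
    have aps: "a p \<in> simplex m" using ap init_action pn by simp
    have appos: "\<forall>j<m. a p j > 0"
    proof (intro allI impI)
      fix j assume j: "j < m"
      have "a p j \<ge> 0" using aps j unfolding simplex_def by simp
      moreover have "a p j \<noteq> 0" using init_nonzero pn j ap by simp
      ultimately show "a p j > 0" by simp
    qed
    have bs: "b \<in> simplex m" using br unfolding best_response_def by simp
    have bnn: "\<forall>j<m. 0 \<le> b j" and bsum: "(\<Sum>j<m. b j) = 1" using bs unfolding simplex_def by auto
    have apsum: "(\<Sum>j<m. a p j) = 1" using aps unfolding simplex_def by auto
    define l where "l = oth n mu s0 lam p a"
    have la: "lam p > 0" using lam_pos pn by simp
    have opt: "\<forall>b'\<in>simplex m. GG m mu l (lam p) b \<le> GG m mu l (lam p) b'"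
      using br unfolding best_response_def cost_GG l_def a_def by simp
    have lvn: "?lv (seq (Suc k)) j = l j + lam p * b j / mu j" for j
      unfolding sq l_def a_def using lv_upd[OF pn] by simp
    have lvo: "?lv a j = l j + lam p * a p j / mu j" for j
      using lv_upd[OF pn, of mu s0 lam a "a p" j] unfolding l_def by simp
    have nec: "\<And>j j'. j < m \<Longrightarrow> j' < m \<Longrightarrow> b j > 0 \<Longrightarrow> ?lv (seq (Suc k)) j \<le> ?lv (seq (Suc k)) j'"
      unfolding lvn using KKT_nec[OF mu_pos la bs opt] by blast
    obtain j0 where j0: "j0 < m" "b j0 > 0"
    proof (rule ccontr)
      assume "\<not> thesis"
      then have "\<forall>j<m. b j \<le> 0" using that by force
      then have "(\<Sum>j<m. b j) \<le> 0" by (intro sum_nonpos) auto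
      with bsum show False by simp
    qed
    define c' where "c' = ?lv (seq (Suc k)) j0"
    have hmin: "\<forall>j<m. c' \<le> ?lv (seq (Suc k)) j" using nec j0 unfolding c'_def by blast
    have heq: "\<forall>j<m. b j > 0 \<longrightarrow> ?lv (seq (Suc k)) j = c'"
      using nec j0 hmin unfolding c'_def by (meson order_antisym)
    have hc: "c \<le> c'"
    proof (rule ccontr)
      assume "\<not> c \<le> c'"
      then have cc: "c' < c" by simp
      have lt: "b j < a p j" if j: "j < m" for j
      proof (cases "b j > 0")
        case True
        then have "l j + lam p * b j / mu j < l j + lam p * a p j / mu j"
          using heq cc I3a j lvn lvo unfolding a_def by fastforce
        then have "lam p * b j / mu j < lam p * a p j / mu j" by simp
        then have "lam p * b j < lam p * a p j" using mu_pos j by (simp add: divide_less_cancel)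
        then show ?thesis using la by simp
      next
        case False
        then show ?thesis using appos bnn j by force
      qed
      have "(\<Sum>j<m. b j) < (\<Sum>j<m. a p j)"
        using lt j0 by (intro sum_strict_mono) auto
      with bsum apsum show False by simp
    qed
    show ?case
    proof (intro conjI)
      show "\<forall>i<n. i \<notin> \<sigma>`{..<Suc k} \<longrightarrow> seq (Suc k) i = seq 0 i"
        using I1 unfolding U sq by auto
      show "\<forall>i\<in>\<sigma>`{..<Suc k}. seq (Suc k) i \<in> simplex m"
        using I2 bs unfolding U sq by auto
      have "\<forall>i\<in>\<sigma>`{..<Suc k}. \<forall>j<m. seq (Suc k) i j > 0 \<longrightarrow> ?lv (seq (Suc k)) j = c'"
      proof (intro ballI allI impI)
        fix i j assume i: "i \<in> \<sigma>`{..<Suc k}" and j: "j < m" and pos: "seq (Suc k) i j > 0"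
        show "?lv (seq (Suc k)) j = c'"
        proof (cases "i = p")
          case True
          then show ?thesis using heq j pos unfolding sq by simp
        next
          case False
          then have iU: "i \<in> \<sigma>`{..<k}" using i U by auto
          have "a i j > 0" using pos False unfolding sq a_def by simp
          then have lc: "?lv a j = c" using I3b iU j unfolding a_def by blast
          have "b j > 0"
          proof (rule ccontr)
            assume "\<not> b j > 0"
            then have "b j = 0" using bnn j by force
            then have "?lv (seq (Suc k)) j = l j" using lvn by simp
            moreover have "l j < c"
            proof -
              have "lam p * a p j / mu j > 0" using la appos mu_pos j by simp
              then show ?thesis using lc lvo[of j] by linarith
            qed
            ultimately show False using hmin hc j by fastforce
          qed
          then show ?thesis using heq j by simp
        qed
      qed
      then show "\<exists>c. (\<forall>j<m. c \<le> ?lv (seq (Suc k)) j) \<and> (\<forall>i\<in>\<sigma>`{..<Suc k}. \<forall>j<m. seq (Suc k) i j > 0 \<longrightarrow> ?lv (seq (Suc k)) j = c)"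
        using hmin by blast
    qed
  qed
  have Un: "\<sigma>`{..<n} = {..<n}" using order unfolding bij_betw_def by simp
  from inv[of n] obtain c where
    S: "\<forall>i<n. seq n i \<in> simplex m" and
    C1: "\<forall>j<m. c \<le> ?lv (seq n) j" and
    C2: "\<forall>i<n. \<forall>j<m. seq n i j > 0 \<longrightarrow> ?lv (seq n) j = c" unfolding Un by auto
  show ?thesis unfolding pure_NE_def
  proof (intro conjI allI impI ballI)
    fix i assume "i < n" then show "seq n i \<in> simplex m" using S by simp
  next
    fix i b' assume i: "i < n" and b': "b' \<in> simplex m"
    define a where "a = seq n"
    define l where "l = oth n mu s0 lam i a"
    have lvo: "?lv a j = l j + lam i * a i j / mu j" for j
      using lv_upd[OF i, of mu s0 lam a "a i" j] unfolding l_def by simp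
    have "GG m mu l (lam i) (a i) \<le> GG m mu l (lam i) b'"
      apply (rule KKT_suff[OF mu_pos _ _ b', where c=c])
      using lam_pos i S C1 C2 lvo unfolding a_def by auto
    then have "cost m n mu s0 lam i (a(i := a i)) \<le> cost m n mu s0 lam i (a(i := b'))"
      unfolding cost_GG l_def .
    then show "cost m n mu s0 lam i (seq n) \<le> cost m n mu s0 lam i ((seq n)(i := b'))"
      unfolding a_def by simp
  qed
qed

end
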